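(* If an $r$-graph $H$ is $2$-locally large, then $H$ has at least three edges.
   Context: An $r$-graph is an $r$-uniform hypergraph. Let $H$ be an $r$-graph on $m$ vertices and $\sigma:V(H)\to[m]$ a bijection. For $x\in V(H)$ and $1\le i\le r$, $T_x^i$ is the set of edges $e\ni x$ such that $\sigma(x)$ is the $i$-th smallest of the values $\sigma(v)$, $v\in e$. For $r+1\le i\le 2r+1$, $T_x^i$ is the set of edges $e\not\ni x$ such that $\sigma(x)$ is the $(i-r)$-th smallest among the values $\sigma(v)$, $v\in e\cup\{x\}$. $H$ is $2$-locally large if there exists a bijection $\sigma:V(H)\to[m]$ such that for every vertex $x\in V(H)$ some $T_x^i$, $i\in[2r+1]$, contains at least two edges. *)

theory Defs
  imports Main
begin

definition r_graph :: "nat \<Rightarrow> 'a set \<Rightarrow> 'a set set \<Rightarrow> bool" where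
  "r_graph r V E \<longleftrightarrow> finite V \<and> (\<forall>e\<in>E. e \<subseteq> V \<and> card e = r)"

text \<open>The i-th smallest element (1-based) of a finite set of naturals.\<close>
definition ith_smallest :: "nat \<Rightarrow> nat set \<Rightarrow> nat" where
  "ith_smallest i S = sorted_list_of_set S ! (i - 1)"

definition T_set :: "nat \<Rightarrow> 'a set set \<Rightarrow> ('a \<Rightarrow> nat) \<Rightarrow> 'a \<Rightarrow> nat \<Rightarrow> 'a set set" where
  "T_set r E \<sigma> x i =
     (if 1 \<le> i \<and> i \<le> r then
        {e \<in> E. x \<in> e \<and> \<sigma> x = ith_smallest i (\<sigma> ` e)}
      else if r + 1 \<le> i \<and> i \<le> 2 * r + 1 then
        {e \<in> E. x \<notin> e \<and> \<sigma> x = ith_smallest (i - r) (\<sigma> ` (e \<union> {x}))}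
      else {})"

definition two_locally_large :: "nat \<Rightarrow> 'a set \<Rightarrow> 'a set set \<Rightarrow> bool" where
  "two_locally_large r V E \<longleftrightarrow>
     (\<exists>\<sigma>. bij_betw \<sigma> V {1..card V} \<and>
        (\<forall>x\<in>V. \<exists>i\<in>{1..2 * r + 1}. 2 \<le> card (T_set r E \<sigma> x i)))"

end

theory Submission
  imports Defs
begin

lemma T_sub: "T_set r E \<sigma> x i \<subseteq> E"
  unfolding T_set_def by auto

lemma T_mem: "e1 \<in> T_set r E \<sigma> x i \<Longrightarrow> e2 \<in> T_set r E \<sigma> x i \<Longrightarrow> (x \<in> e1 \<longleftrightarrow> x \<in> e2)"
  unfolding T_set_def by (auto split: if_splits)

theorem proposition1:
  fixes r :: nat and V :: "'a set" and E :: "'a set set"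
  assumes "r_graph r V E"
    and "V \<noteq> {}"
    and "two_locally_large r V E"
  shows "card E \<ge> 3"
proof (rule ccontr)
  assume le: "\<not> card E \<ge> 3"
  have fV: "finite V" and EV: "\<forall>e\<in>E. e \<subseteq> V \<and> card e = r"
    using assms(1) unfolding r_graph_def by auto
  have fE: "finite E" proof -
    have "E \<subseteq> Pow V" using EV by auto
    then show ?thesis using fV finite_subset by (metis finite_Pow_iff)
  qed
  obtain \<sigma> where H: "\<forall>x\<in>V. \<exists>i\<in>{1..2 * r + 1}. 2 \<le> card (T_set r E \<sigma> x i)"
    using assms(3) unfolding two_locally_large_def by blast
  obtain x where x: "x \<in> V" using assms(2) by blast
  then obtain i where "2 \<le> card (T_set r E \<sigma> x i)" using H by blast
  moreover have "card (T_set r E \<sigma> x i) \<le> card E" by (rule card_mono[OF fE T_sub])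
  ultimately have "card E = 2" using le by linarith
  then obtain e1 e2 where E: "E = {e1, e2}" and ne: "e1 \<noteq> e2" unfolding card_2_iff by blast
  have "\<not> e1 \<subseteq> e2"
  proof
    assume "e1 \<subseteq> e2"
    moreover have "card e1 = card e2" "finite e2" using EV E fV finite_subset by auto
    ultimately show False using ne card_subset_eq by metis
  qed
  then obtain y where y: "y \<in> e1" "y \<notin> e2" by blast
  have "y \<in> V" using EV E y by auto
  then obtain j where j: "2 \<le> card (T_set r E \<sigma> y j)" using H by blast
  have "T_set r E \<sigma> y j = E"
  proof (rule card_subset_eq[OF fE T_sub])
    have "card (T_set r E \<sigma> y j) \<le> card E" by (rule card_mono[OF fE T_sub])
    then show "card (T_set r E \<sigma> y j) = card E" using j \<open>card E = 2\<close> by linarith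
  qed
  then show False using T_mem[of e1 r E \<sigma> y j e2] y E by auto
qed

end
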